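(* Let $u_1,\dots,u_n$ be Boolean variables and $C_1,\dots,C_m$ clauses, each consisting of exactly 3 literals over these variables. Let $G$ be the graph with vertex set $\{x_i,u_i,v_i,\bar u_i,y_i:1\le i\le n\}\cup\{c_j:1\le j\le m\}\cup\{s_1,s_2,s_3,s_4,t\}$ and the following edges: for each $i$, $x_iu_i$, $u_iv_i$, $v_i\bar u_i$, $\bar u_iy_i$; for each $j$, an edge from $c_j$ to $u_i$ (resp. $\bar u_i$) whenever the literal $u_i$ (resp. $\bar u_i$) appears in $C_j$; for each $j$ and each $s\in\{s_1,s_3,s_4\}$, the edge $sc_j$; the edges $s_1s_2,s_3s_2,s_4s_2$; the edges $ts_1,ts_3,ts_4$; and the edges $tu_i$, $t\bar u_i$ for all $i$. Then $\tilde\gamma_c(G)\ge 3n+1$, and the collection $\{C_1,\dots,C_m\}$ is satisfiable if and only if $\tilde\gamma_c(G)=3n+1$.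
   Context: All graphs are finite and simple. A set $S\subseteq V$ is a dominating set of $G=(V,E)$ if every vertex not in $S$ is adjacent to a vertex of $S$. A set $\tilde D\subseteq V$ is an outer-connected dominating set of $G$ if $\tilde D$ is dominating and the induced subgraph $G[V\setminus\tilde D]$ is connected (the empty graph counts as connected). $\tilde\gamma_c(G)$ denotes the minimum size of an outer-connected dominating set of $G$. A collection of clauses is satisfiable if some truth assignment to the variables makes every clause contain a true literal. *)

theory Defs
  imports Main
begin

definition dominating :: "'a set \<Rightarrow> ('a \<Rightarrow> 'a \<Rightarrow> bool) \<Rightarrow> 'a set \<Rightarrow> bool" where
  "dominating Vs E S \<longleftrightarrow> S \<subseteq> Vs \<and> (\<forall>v \<in> Vs - S. \<exists>s \<in> S. E v s)"

text \<open>Connectedness of the induced subgraph on W (the empty graph counts as connected).\<close>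
definition induced_connected :: "('a \<Rightarrow> 'a \<Rightarrow> bool) \<Rightarrow> 'a set \<Rightarrow> bool" where
  "induced_connected E W \<longleftrightarrow>
     (\<forall>a \<in> W. \<forall>b \<in> W. (a, b) \<in> {(x, y). x \<in> W \<and> y \<in> W \<and> E x y}\<^sup>*)"

definition outer_connected_dominating :: "'a set \<Rightarrow> ('a \<Rightarrow> 'a \<Rightarrow> bool) \<Rightarrow> 'a set \<Rightarrow> bool" where
  "outer_connected_dominating Vs E D \<longleftrightarrow> dominating Vs E D \<and> induced_connected E (Vs - D)"

definition gamma_oc :: "'a set \<Rightarrow> ('a \<Rightarrow> 'a \<Rightarrow> bool) \<Rightarrow> nat" where
  "gamma_oc Vs E = (LEAST k. \<exists>D. outer_connected_dominating Vs E D \<and> card D = k)"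

datatype vtx = X nat | U nat | V nat | UB nat | Y nat | C nat | S1 | S2 | S3 | S4 | T

text \<open>A literal is a pair (i, b): (i, True) is u_i and (i, False) is the negation of u_i.
  Clauses are indexed 1..m, each a set of literals.\<close>

definition red_verts :: "nat \<Rightarrow> nat \<Rightarrow> vtx set" where
  "red_verts n m = X ` {1..n} \<union> U ` {1..n} \<union> V ` {1..n} \<union> UB ` {1..n} \<union> Y ` {1..n}
     \<union> C ` {1..m} \<union> {S1, S2, S3, S4, T}"

definition red_base_edge :: "nat \<Rightarrow> nat \<Rightarrow> (nat \<Rightarrow> (nat \<times> bool) set) \<Rightarrow> vtx \<Rightarrow> vtx \<Rightarrow> bool" where
  "red_base_edge n m Cl a b \<longleftrightarrow>
     (\<exists>i \<in> {1..n}. (a = X i \<and> b = U i) \<or> (a = U i \<and> b = V i) \<or> (a = V i \<and> b = UB i)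
        \<or> (a = UB i \<and> b = Y i) \<or> (a = T \<and> b = U i) \<or> (a = T \<and> b = UB i))
   \<or> (\<exists>j \<in> {1..m}. \<exists>i \<in> {1..n}. ((i, True) \<in> Cl j \<and> a = C j \<and> b = U i)
        \<or> ((i, False) \<in> Cl j \<and> a = C j \<and> b = UB i))
   \<or> (\<exists>j \<in> {1..m}. a \<in> {S1, S3, S4} \<and> b = C j)
   \<or> (a \<in> {S1, S3, S4} \<and> b = S2)
   \<or> (a = T \<and> b \<in> {S1, S3, S4})"

definition red_adj :: "nat \<Rightarrow> nat \<Rightarrow> (nat \<Rightarrow> (nat \<times> bool) set) \<Rightarrow> vtx \<Rightarrow> vtx \<Rightarrow> bool" where
  "red_adj n m Cl a b \<longleftrightarrow> red_base_edge n m Cl a b \<or> red_base_edge n m Cl b a"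

definition satisfiable :: "nat \<Rightarrow> (nat \<Rightarrow> (nat \<times> bool) set) \<Rightarrow> bool" where
  "satisfiable m Cl \<longleftrightarrow> (\<exists>a :: nat \<Rightarrow> bool. \<forall>j \<in> {1..m}. \<exists>(i, b) \<in> Cl j. a i = b)"

end

theory Submission
  imports Defs
begin

context fixes n m :: nat and Cl :: "nat \<Rightarrow> (nat \<times> bool) set" begin
lemma adj_X: "red_adj n m Cl (X i) w \<longleftrightarrow> i\<in>{1..n} \<and> w = U i"
  by (auto simp: red_adj_def red_base_edge_def)
lemma adj_Y: "red_adj n m Cl (Y i) w \<longleftrightarrow> i\<in>{1..n} \<and> w = UB i"
  by (auto simp: red_adj_def red_base_edge_def)
lemma adj_V: "red_adj n m Cl (V i) w \<longleftrightarrow> i\<in>{1..n} \<and> (w = U i \<or> w = UB i)"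
  by (auto simp: red_adj_def red_base_edge_def)
lemma adj_S2: "red_adj n m Cl S2 w \<longleftrightarrow> w \<in> {S1,S3,S4}"
  by (auto simp: red_adj_def red_base_edge_def)
lemma adj_S1: "red_adj n m Cl S1 w \<longleftrightarrow> w = S2 \<or> w = T \<or> (\<exists>j\<in>{1..m}. w = C j)"
  by (auto simp: red_adj_def red_base_edge_def)
lemma adj_S3: "red_adj n m Cl S3 w \<longleftrightarrow> w = S2 \<or> w = T \<or> (\<exists>j\<in>{1..m}. w = C j)"
  by (auto simp: red_adj_def red_base_edge_def)
lemma adj_C: "red_adj n m Cl (C j) w \<longleftrightarrow> j\<in>{1..m} \<and> (w \<in> {S1,S3,S4} \<or> (\<exists>i\<in>{1..n}. (i,True)\<in>Cl j \<and> w = U i) \<or> (\<exists>i\<in>{1..n}. (i,False)\<in>Cl j \<and> w = UB i))"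
  by (auto simp: red_adj_def red_base_edge_def)
lemma adj_misc: "i\<in>{1..n} \<Longrightarrow> red_adj n m Cl (U i) T \<and> red_adj n m Cl T (U i) \<and> red_adj n m Cl (UB i) T \<and> red_adj n m Cl T (UB i) \<and> red_adj n m Cl (V i) (U i) \<and> red_adj n m Cl (U i) (V i) \<and> red_adj n m Cl (V i) (UB i) \<and> red_adj n m Cl (UB i) (V i)
   \<and> red_adj n m Cl (U i) (X i) \<and> red_adj n m Cl (UB i) (Y i)"
  by (auto simp: red_adj_def red_base_edge_def)
lemma adj_misc2: "red_adj n m Cl S1 T \<and> red_adj n m Cl T S1 \<and> red_adj n m Cl S3 T \<and> red_adj n m Cl T S3 \<and> red_adj n m Cl S4 T \<and> red_adj n m Cl T S4 \<and> red_adj n m Cl S1 S2 \<and> red_adj n m Cl S3 S2 \<and> red_adj n m Cl S4 S2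
  \<and> (j \<in> {1..m} \<longrightarrow> red_adj n m Cl (C j) S1 \<and> red_adj n m Cl S1 (C j))"
  by (auto simp: red_adj_def red_base_edge_def)
abbreviation "Vs \<equiv> red_verts n m"
definition "Gi i = {X i, U i, V i, UB i, Y i}"
definition "SS = {S1,S2,S3,S4}"
definition "RR = insert T (C ` {1..m})"

lemma Vs_fin: "finite Vs" by (simp add: red_verts_def)

lemma Vs_decomp: "Vs = (\<Union>i\<in>{1..n}. Gi i) \<union> SS \<union> RR"
  by (auto simp: red_verts_def Gi_def SS_def RR_def)

lemma decomp: assumes "D \<subseteq> Vs"
  shows "card D = (\<Sum>i\<in>{1..n}. card (D \<inter> Gi i)) + card (D \<inter> SS) + card (D \<inter> RR)"
proof -
  have fD: "finite D" using assms Vs_fin finite_subset by blast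
  have "D = (\<Union>i\<in>{1..n}. D \<inter> Gi i) \<union> (D \<inter> SS) \<union> (D \<inter> RR)"
    using assms Vs_decomp by blast
  hence "card D = card ((\<Union>i\<in>{1..n}. D \<inter> Gi i) \<union> (D \<inter> SS) \<union> (D \<inter> RR))" by simp
  also have "\<dots> = card ((\<Union>i\<in>{1..n}. D \<inter> Gi i) \<union> (D \<inter> SS)) + card (D \<inter> RR)"
    by (rule card_Un_disjoint) (use fD in \<open>auto simp: Gi_def SS_def RR_def\<close>)
  also have "card ((\<Union>i\<in>{1..n}. D \<inter> Gi i) \<union> (D \<inter> SS)) = card (\<Union>i\<in>{1..n}. D \<inter> Gi i) + card (D \<inter> SS)"
    by (rule card_Un_disjoint) (use fD in \<open>auto simp: Gi_def SS_def\<close>)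
  also have "card (\<Union>i\<in>{1..n}. D \<inter> Gi i) = (\<Sum>i\<in>{1..n}. card (D \<inter> Gi i))"
    by (rule card_UN_disjoint) (use fD in \<open>auto simp: Gi_def\<close>)
  finally show ?thesis .
qed

lemma two_elem: assumes "2 \<le> card A" shows "\<exists>b\<in>A. b \<noteq> a"
proof (rule ccontr)
  assume "\<not> ?thesis" hence "A \<subseteq> {a}" by auto
  hence "card A \<le> card {a}" by (rule card_mono[rotated]) simp
  thus False using assms by simp
qed

lemma leaf_in:
  assumes ocd: "outer_connected_dominating Vs (red_adj n m Cl) D" and two: "2 \<le> card (Vs - D)"
    and xin: "x \<in> Vs" and nb: "\<And>w. red_adj n m Cl x w \<Longrightarrow> w = u"
  shows "x \<in> D"
proof (rule ccontr)
  assume xn: "x \<notin> D"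
  have dom: "\<forall>v \<in> Vs - D. \<exists>s \<in> D. red_adj n m Cl v s" and
    conn: "induced_connected (red_adj n m Cl) (Vs - D)"
    using ocd unfolding outer_connected_dominating_def dominating_def by auto
  have xW: "x \<in> Vs - D" using xin xn by simp
  from bspec[OF dom xW] obtain s where "s \<in> D" "red_adj n m Cl x s" by blast
  hence uD: "u \<in> D" using nb by blast
  obtain b where b: "b \<in> Vs - D" "b \<noteq> x" using two_elem[OF two] by blast
  have "\<forall>a\<in>Vs - D. \<forall>b\<in>Vs - D. (a, b) \<in> {(p, q). p \<in> Vs - D \<and> q \<in> Vs - D \<and> red_adj n m Cl p q}\<^sup>*"
    using conn unfolding induced_connected_def .
  from bspec[OF bspec[OF this xW] b(1)]
  have "(x, b) \<in> {(p, q). p \<in> Vs - D \<and> q \<in> Vs - D \<and> red_adj n m Cl p q}\<^sup>*" .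
  then show False
  proof (cases rule: converse_rtranclE)
    case base then show False using b(2) by simp
  next
    case (step c)
    then have "c \<in> Vs - D" "red_adj n m Cl x c" by auto
    then show False using nb uD by blast
  qed
qed

lemma key:
  assumes ocd: "outer_connected_dominating Vs (red_adj n m Cl) D"
  shows "(\<forall>i\<in>{1..n}. 3 \<le> card (D \<inter> Gi i)) \<and> D \<inter> SS \<noteq> {}"
proof (cases "2 \<le> card (Vs - D)")
  case True
  have dom: "\<And>v. v \<in> Vs \<Longrightarrow> v \<notin> D \<Longrightarrow> \<exists>s\<in>D. red_adj n m Cl v s"
    using ocd unfolding outer_connected_dominating_def dominating_def by blast
  have DV: "D \<subseteq> Vs" using ocd unfolding outer_connected_dominating_def dominating_def by blast
  have fD: "finite D" using DV Vs_fin finite_subset by blast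
  show ?thesis
  proof (intro conjI ballI)
    fix i assume i: "i \<in> {1..n}"
    have xi: "X i \<in> D"
      by (rule leaf_in[OF ocd True, of _ "U i"]) (use i in \<open>auto simp: red_verts_def adj_X\<close>)
    have yi: "Y i \<in> D"
      by (rule leaf_in[OF ocd True, of _ "UB i"]) (use i in \<open>auto simp: red_verts_def adj_Y\<close>)
    obtain w where w: "w \<in> D" "w \<in> {U i, V i, UB i}"
    proof (cases "V i \<in> D")
      case True then show ?thesis using that by blast
    next
      case False
      then obtain s where "s \<in> D" "red_adj n m Cl (V i) s" using dom[of "V i"] i by (auto simp: red_verts_def)
      then show ?thesis using that by (auto simp: adj_V)
    qed
    have "{X i, Y i, w} \<subseteq> D \<inter> Gi i" using xi yi w by (auto simp: Gi_def)
    moreover have "card {X i, Y i, w} = 3" using w by auto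
    ultimately show "3 \<le> card (D \<inter> Gi i)" using fD by (metis card_mono finite_Int)
  next
    show "D \<inter> SS \<noteq> {}"
    proof (cases "S2 \<in> D")
      case True then show ?thesis by (auto simp: SS_def)
    next
      case False
      then obtain s where "s \<in> D" "red_adj n m Cl S2 s" using dom[of S2] by (auto simp: red_verts_def)
      then show ?thesis by (auto simp: adj_S2 SS_def)
    qed
  qed
next
  case False
  hence le1: "card (Vs - D) \<le> 1" by simp
  have bound: "card A \<le> card (D \<inter> A) + 1" if "A \<subseteq> Vs" for A
  proof -
    have "A = (D \<inter> A) \<union> (A \<inter> (Vs - D))" using that by blast
    hence "card A \<le> card (D \<inter> A) + card (A \<inter> (Vs - D))" by (metis card_Un_le)
    also have "card (A \<inter> (Vs - D)) \<le> card (Vs - D)"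
      by (rule card_mono) (use Vs_fin in auto)
    finally show ?thesis using le1 by simp
  qed
  show ?thesis
  proof (intro conjI ballI)
    fix i assume i: "i \<in> {1..n}"
    have "Gi i \<subseteq> Vs" using i by (auto simp: Gi_def red_verts_def)
    moreover have "card (Gi i) = 5" by (simp add: Gi_def)
    ultimately show "3 \<le> card (D \<inter> Gi i)" using bound[of "Gi i"] by linarith
  next
    have "SS \<subseteq> Vs" by (auto simp: SS_def red_verts_def)
    moreover have "card SS = 4" by (simp add: SS_def)
    ultimately have "3 \<le> card (D \<inter> SS)" using bound[of SS] by linarith
    thus "D \<inter> SS \<noteq> {}" by auto
  qed
qed

lemma lower:
  assumes ocd: "outer_connected_dominating (red_verts n m) (red_adj n m Cl) D"
  shows "3 * n + 1 \<le> card D"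
proof -
  have DV: "D \<subseteq> red_verts n m" using ocd unfolding outer_connected_dominating_def dominating_def by blast
  have fD: "finite D" using DV Vs_fin finite_subset by blast
  from key[OF ocd] have k1: "\<forall>i\<in>{1..n}. 3 \<le> card (D \<inter> Gi i)" and k2: "D \<inter> SS \<noteq> {}" by auto
  have "(\<Sum>i\<in>{1..n}. (3::nat)) \<le> (\<Sum>i\<in>{1..n}. card (D \<inter> Gi i))"
    by (rule sum_mono) (use k1 in auto)
  hence "3 * n \<le> (\<Sum>i\<in>{1..n}. card (D \<inter> Gi i))" by simp
  moreover have "1 \<le> card (D \<inter> SS)" using k2 fD by (simp add: Suc_le_eq card_gt_0_iff)
  ultimately show ?thesis using decomp[OF DV] by linarith
qed

lemma tight:
  assumes ocd: "outer_connected_dominating (red_verts n m) (red_adj n m Cl) D"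
    and cD: "card D = 3 * n + 1"
  shows "satisfiable m Cl"
proof -
  have DV: "D \<subseteq> red_verts n m" using ocd unfolding outer_connected_dominating_def dominating_def by blast
  have dom: "\<And>v. v \<in> red_verts n m \<Longrightarrow> v \<notin> D \<Longrightarrow> \<exists>s\<in>D. red_adj n m Cl v s"
    using ocd unfolding outer_connected_dominating_def dominating_def by blast
  have fD: "finite D" using DV Vs_fin finite_subset by blast
  have "card (red_verts n m) = (\<Sum>i\<in>{1..n}. card (red_verts n m \<inter> Gi i)) + card (red_verts n m \<inter> SS) + card (red_verts n m \<inter> RR)"
    by (rule decomp) simp
  moreover have "(\<Sum>i\<in>{1..n}. card (red_verts n m \<inter> Gi i)) = (\<Sum>i\<in>{1..n}. 5)"
  proof (rule sum.cong)
    fix i assume "i \<in> {1..n}"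
    hence "red_verts n m \<inter> Gi i = Gi i" by (auto simp: red_verts_def Gi_def)
    thus "card (red_verts n m \<inter> Gi i) = 5" by (simp add: Gi_def)
  qed simp
  moreover have "red_verts n m \<inter> SS = SS" by (auto simp: red_verts_def SS_def)
  moreover have "card SS = 4" by (simp add: SS_def)
  ultimately have cV: "5 * n + 4 \<le> card (red_verts n m)" by simp
  have two: "2 \<le> card (red_verts n m - D)" using cV cD DV Vs_fin by (simp add: card_Diff_subset fD)
  from key[OF ocd] have k1: "\<forall>i\<in>{1..n}. 3 \<le> card (D \<inter> Gi i)" and k2: "D \<inter> SS \<noteq> {}" by auto
  have "(\<Sum>i\<in>{1..n}. (3::nat)) \<le> (\<Sum>i\<in>{1..n}. card (D \<inter> Gi i))"
    by (rule sum_mono) (use k1 in auto)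
  hence A: "3 * n \<le> (\<Sum>i\<in>{1..n}. card (D \<inter> Gi i))" by simp
  have B: "1 \<le> card (D \<inter> SS)" using k2 fD by (simp add: Suc_le_eq card_gt_0_iff)
  have dc: "card D = (\<Sum>i\<in>{1..n}. card (D \<inter> Gi i)) + card (D \<inter> SS) + card (D \<inter> RR)"
    using decomp[OF DV] .
  have A': "(\<Sum>i\<in>{1..n}. card (D \<inter> Gi i)) = 3 * n" and B': "card (D \<inter> SS) = 1"
    and C': "card (D \<inter> RR) = 0" using A B dc cD by linarith+
  have RRe: "D \<inter> RR = {}" using C' fD by simp
  have TD: "T \<notin> D" using RRe by (auto simp: RR_def)
  have CD: "\<And>j. j \<in> {1..m} \<Longrightarrow> C j \<notin> D" using RRe by (auto simp: RR_def)
  have notboth: "\<not> (U i \<in> D \<and> UB i \<in> D)" if i: "i \<in> {1..n}" for i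
  proof
    assume both: "U i \<in> D \<and> UB i \<in> D"
    have xi: "X i \<in> D"
      by (rule leaf_in[OF ocd two, of _ "U i"]) (use i in \<open>auto simp: red_verts_def adj_X\<close>)
    have yi: "Y i \<in> D"
      by (rule leaf_in[OF ocd two, of _ "UB i"]) (use i in \<open>auto simp: red_verts_def adj_Y\<close>)
    have "{X i, Y i, U i, UB i} \<subseteq> D \<inter> Gi i" using xi yi both by (auto simp: Gi_def)
    moreover have "card {X i, Y i, U i, UB i} = 4" by simp
    ultimately have "4 \<le> card (D \<inter> Gi i)" using fD by (metis card_mono finite_Int)
    hence ex3: "\<exists>a\<in>{1..n}. 3 < card (D \<inter> Gi a)" using i by force
    have "(\<Sum>i\<in>{1..n}. (3::nat)) < (\<Sum>i\<in>{1..n}. card (D \<inter> Gi i))"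
      by (rule sum_strict_mono_ex1) (use k1 ex3 in auto)
    thus False using A' by simp
  qed
  obtain s where s: "D \<inter> SS = {s}" using B' by (auto simp: card_1_singleton_iff)
  have nbS: "\<And>w. red_adj n m Cl S1 w \<Longrightarrow> w \<in> D \<Longrightarrow> w = S2"
    "\<And>w. red_adj n m Cl S3 w \<Longrightarrow> w \<in> D \<Longrightarrow> w = S2"
    using TD CD by (auto simp: adj_S1 adj_S3)
  have S2D: "S2 \<in> D"
  proof (rule ccontr)
    assume n2: "S2 \<notin> D"
    have "S1 \<in> D"
    proof (rule ccontr)
      assume "S1 \<notin> D"
      then obtain w where "w \<in> D" "red_adj n m Cl S1 w" using dom[of S1] by (auto simp: red_verts_def)
      thus False using nbS n2 by blast
    qed
    hence "s = S1" using s by (auto simp: SS_def)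
    hence "S3 \<notin> D" using s by (auto simp: SS_def)
    then obtain w where "w \<in> D" "red_adj n m Cl S3 w" using dom[of S3] by (auto simp: red_verts_def)
    thus False using nbS n2 by blast
  qed
  hence "s = S2" using s by (auto simp: SS_def)
  hence S134: "S1 \<notin> D" "S3 \<notin> D" "S4 \<notin> D" using s by (auto simp: SS_def)
  show ?thesis unfolding satisfiable_def
  proof (intro exI[of _ "\<lambda>i. U i \<in> D"] ballI)
    fix j assume j: "j \<in> {1..m}"
    then obtain w where w: "w \<in> D" "red_adj n m Cl (C j) w" using dom[of "C j"] CD[OF j] by (auto simp: red_verts_def)
    then consider (t) i where "i \<in> {1..n}" "(i, True) \<in> Cl j" "w = U i"
      | (f) i where "i \<in> {1..n}" "(i, False) \<in> Cl j" "w = UB i"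
      using S134 by (auto simp: adj_C)
    then show "\<exists>(i, b)\<in>Cl j. (U i \<in> D) = b"
    proof cases
      case t then show ?thesis using w by auto
    next
      case f then show ?thesis using w notboth[of i] by auto
    qed
  qed
qed
lemma sym_adj: "red_adj n m Cl p q \<Longrightarrow> red_adj n m Cl q p"
  by (auto simp: red_adj_def)

lemma sat_ocd:
  assumes n1: "n \<ge> 1"
    and cl: "\<forall>j \<in> {1..m}. card (Cl j) = 3 \<and> (\<forall>(i, b) \<in> Cl j. i \<in> {1..n})"
    and sat: "satisfiable m Cl"
  shows "\<exists>D. outer_connected_dominating (red_verts n m) (red_adj n m Cl) D \<and> card D = 3 * n + 1"
proof -
  from sat obtain a where a: "\<forall>j \<in> {1..m}. \<exists>(i, b) \<in> Cl j. a i = b" unfolding satisfiable_def by blast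
  define L where "L = (\<lambda>i. if a i then U i else UB i)"
  define L' where "L' = (\<lambda>i. if a i then UB i else U i)"
  define I where "I = {1..n::nat}"
  define D where "D = X ` I \<union> Y ` I \<union> L ` I \<union> {S2}"
  define W where "W = red_verts n m - D"
  have injL: "inj_on L I" by (auto simp: inj_on_def L_def split: if_splits)
  have cardD: "card D = 3 * n + 1"
  proof -
    have iX: "inj_on X I" by (rule inj_onI) simp
    have iY: "inj_on Y I" by (rule inj_onI) simp
    have "card (X ` I) = n" using card_image[OF iX] by (simp add: I_def)
    moreover have "card (Y ` I) = n" using card_image[OF iY] by (simp add: I_def)
    moreover have "card (L ` I) = n" using card_image[OF injL] by (simp add: I_def)
    moreover have "card (X ` I \<union> Y ` I) = card (X ` I) + card (Y ` I)"
      by (rule card_Un_disjoint) (auto simp: I_def)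
    moreover have "card (X ` I \<union> Y ` I \<union> L ` I) = card (X ` I \<union> Y ` I) + card (L ` I)"
      by (rule card_Un_disjoint) (auto simp: I_def L_def)
    moreover have "card (X ` I \<union> Y ` I \<union> L ` I \<union> {S2}) = card (X ` I \<union> Y ` I \<union> L ` I) + card {S2}"
      by (rule card_Un_disjoint) (auto simp: I_def L_def)
    ultimately show ?thesis unfolding D_def by simp
  qed
  have DV: "D \<subseteq> red_verts n m" by (auto simp: D_def red_verts_def I_def L_def)
  have Lin: "\<And>i. i \<in> I \<Longrightarrow> L i \<in> D" by (auto simp: D_def)
  have L'W: "\<And>i. i \<in> I \<Longrightarrow> L' i \<in> W"
    by (auto simp: W_def D_def red_verts_def I_def L_def L'_def)
  have LE: "\<And>i. i \<in> I \<Longrightarrow> red_adj n m Cl (V i) (L i) \<and> red_adj n m Cl T (L i)"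
    by (auto simp: L_def I_def adj_misc)
  have L'E: "\<And>i. i \<in> I \<Longrightarrow> red_adj n m Cl (V i) (L' i) \<and> red_adj n m Cl (L' i) T"
    by (auto simp: L'_def I_def adj_misc)
  have 1: "1 \<in> I" using n1 by (simp add: I_def)
  have domin: "\<exists>s\<in>D. red_adj n m Cl v s" if v: "v \<in> red_verts n m" "v \<notin> D" for v
  proof -
    from v(1) consider (x) i where "i \<in> I" "v = X i" | (u) i where "i \<in> I" "v = U i"
      | (vv) i where "i \<in> I" "v = V i" | (ub) i where "i \<in> I" "v = UB i" | (y) i where "i \<in> I" "v = Y i"
      | (c) j where "j \<in> {1..m}" "v = C j" | (s) "v \<in> {S1, S3, S4}" | (s2) "v = S2" | (t) "v = T"
      unfolding red_verts_def I_def by blast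
    then show ?thesis
    proof cases
      case x then show ?thesis using v by (auto simp: D_def)
    next
      case y then show ?thesis using v by (auto simp: D_def)
    next
      case s2 then show ?thesis using v by (auto simp: D_def)
    next
      case u then show ?thesis using adj_misc[of i] by (auto simp: D_def I_def)
    next
      case ub then show ?thesis using adj_misc[of i] by (auto simp: D_def I_def)
    next
      case vv then show ?thesis using LE Lin by blast
    next
      case t then show ?thesis using LE[OF 1] Lin[OF 1] by blast
    next
      case s then show ?thesis using adj_misc2 by (auto simp: D_def)
    next
      case c
      from a c(1) obtain k b where kb: "(k, b) \<in> Cl j" "a k = b" by blast
      have k: "k \<in> I" using cl c(1) kb(1) by (auto simp: I_def)
      have "red_adj n m Cl (C j) (L k)" using kb k c(1) by (auto simp: L_def adj_C I_def)
      then show ?thesis using Lin[OF k] c by blast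
    qed
  qed
  define R where "R = {(p, q). p \<in> W \<and> q \<in> W \<and> red_adj n m Cl p q}"
  have edge: "(p, q) \<in> R\<^sup>* \<and> (q, p) \<in> R\<^sup>*" if "p \<in> W" "q \<in> W" "red_adj n m Cl p q" for p q
    using that sym_adj[OF that(3)] by (auto simp: R_def)
  have TW: "T \<in> W" by (auto simp: W_def D_def red_verts_def L_def)
  have toT: "(v, T) \<in> R\<^sup>* \<and> (T, v) \<in> R\<^sup>*" if v: "v \<in> W" for v
  proof -
    from v consider (x) i where "i \<in> I" "v = X i" | (u) i where "i \<in> I" "v = U i"
      | (vv) i where "i \<in> I" "v = V i" | (ub) i where "i \<in> I" "v = UB i" | (y) i where "i \<in> I" "v = Y i"
      | (c) j where "j \<in> {1..m}" "v = C j" | (s) "v \<in> {S1, S3, S4}" | (s2) "v = S2" | (t) "v = T"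
      unfolding red_verts_def I_def W_def by blast
    then show ?thesis
    proof cases
      case x then show ?thesis using v by (auto simp: D_def W_def)
    next
      case y then show ?thesis using v by (auto simp: D_def W_def)
    next
      case s2 then show ?thesis using v by (auto simp: D_def W_def)
    next
      case t then show ?thesis by simp
    next
      case u then show ?thesis using edge[OF v TW] adj_misc[of i] by (auto simp: I_def)
    next
      case ub then show ?thesis using edge[OF v TW] adj_misc[of i] by (auto simp: I_def)
    next
      case s then show ?thesis using edge[OF v TW] adj_misc2 by auto
    next
      case vv
      have e1: "(v, L' i) \<in> R\<^sup>* \<and> (L' i, v) \<in> R\<^sup>*" using edge[OF v L'W[OF vv(1)]] L'E[OF vv(1)] vv by auto
      have e2: "(L' i, T) \<in> R\<^sup>* \<and> (T, L' i) \<in> R\<^sup>*" using edge[OF L'W[OF vv(1)] TW] L'E[OF vv(1)] by auto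
      show ?thesis using e1 e2 by (meson rtrancl_trans)
    next
      case c
      have S1W: "S1 \<in> W" by (auto simp: W_def D_def red_verts_def L_def)
      have e1: "(v, S1) \<in> R\<^sup>* \<and> (S1, v) \<in> R\<^sup>*" using edge[OF v S1W] adj_misc2[of j] c by auto
      have e2: "(S1, T) \<in> R\<^sup>* \<and> (T, S1) \<in> R\<^sup>*" using edge[OF S1W TW] adj_misc2 by auto
      show ?thesis using e1 e2 by (meson rtrancl_trans)
    qed
  qed
  have conn: "induced_connected (red_adj n m Cl) (red_verts n m - D)"
    unfolding induced_connected_def
  proof (intro ballI)
    fix p q assume "p \<in> red_verts n m - D" "q \<in> red_verts n m - D"
    hence "p \<in> W" "q \<in> W" by (auto simp: W_def)
    hence "(p, q) \<in> R\<^sup>*" using toT by (meson rtrancl_trans)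
    thus "(p, q) \<in> {(x, y). x \<in> red_verts n m - D \<and> y \<in> red_verts n m - D \<and> red_adj n m Cl x y}\<^sup>*"
      by (simp add: R_def W_def)
  qed
  have "outer_connected_dominating (red_verts n m) (red_adj n m Cl) D"
    unfolding outer_connected_dominating_def dominating_def using DV domin conn by blast
  thus ?thesis using cardD by blast
qed
end

theorem claim5p3:
  fixes n m :: nat and Cl :: "nat \<Rightarrow> (nat \<times> bool) set"
  assumes "n \<ge> 1"
    and "\<forall>j \<in> {1..m}. card (Cl j) = 3 \<and> (\<forall>(i, b) \<in> Cl j. i \<in> {1..n})"
  shows "gamma_oc (red_verts n m) (red_adj n m Cl) \<ge> 3 * n + 1
    \<and> (satisfiable m Cl \<longleftrightarrow> gamma_oc (red_verts n m) (red_adj n m Cl) = 3 * n + 1)"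
proof -
  let ?P = "\<lambda>k. \<exists>D. outer_connected_dominating (red_verts n m) (red_adj n m Cl) D \<and> card D = k"
  have ex: "?P (card (red_verts n m))"
    by (rule exI[of _ "red_verts n m"]) (simp add: outer_connected_dominating_def dominating_def induced_connected_def)
  have g: "gamma_oc (red_verts n m) (red_adj n m Cl) = (LEAST k. ?P k)" by (simp add: gamma_oc_def)
  from LeastI[of ?P, OF ex] obtain D0 where D0: "outer_connected_dominating (red_verts n m) (red_adj n m Cl) D0"
    "card D0 = gamma_oc (red_verts n m) (red_adj n m Cl)" using g by auto
  have lb: "gamma_oc (red_verts n m) (red_adj n m Cl) \<ge> 3 * n + 1" using lower[OF D0(1)] D0(2) by simp
  have "satisfiable m Cl \<longleftrightarrow> gamma_oc (red_verts n m) (red_adj n m Cl) = 3 * n + 1"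
  proof
    assume "satisfiable m Cl"
    then have "?P (3 * n + 1)" using sat_ocd assms by blast
    hence "gamma_oc (red_verts n m) (red_adj n m Cl) \<le> 3 * n + 1" unfolding g by (rule Least_le)
    thus "gamma_oc (red_verts n m) (red_adj n m Cl) = 3 * n + 1" using lb by simp
  next
    assume "gamma_oc (red_verts n m) (red_adj n m Cl) = 3 * n + 1"
    thus "satisfiable m Cl" using tight[OF D0(1)] D0(2) by simp
  qed
  with lb show ?thesis by blast
qed

end
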